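(* Let $n\ge2$, $\kappa\ge1$ and $G\in\mathcal G_{[n;\kappa]}$ with payoff structure vectors $V_1^c,\dots,V_n^c\in\mathbb R^{\kappa^n}$. Consider the conditions (A) $V_i^c=-V_1^c\ltimes W_{[\kappa^{i-2},\kappa]}\ltimes W_{[\kappa,\kappa^{i-1}]}$ for $i=2,\dots,n$; (B) $V_1^c\ltimes\delta_\kappa^s\ltimes\left[I_{\kappa^{n-1}}+\left(W_{[\kappa^{i-2},\kappa]}\ltimes W_{[\kappa,\kappa^{i-3}]}\right)\otimes I_{\kappa^{n-i}}\right]=0$ for all $s=1,\dots,\kappa$ and $i=3,\dots,n$. (1) If $n=2$, then $G$ is skew-symmetric if and only if (A) holds (i.e. $V_2^c=-V_1^c W_{[\kappa,\kappa]}$). (2) If $n>2$, then $G$ is skew-symmetric if and only if (A) and (B) both hold.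
   Context: Semi-tensor product: for $A\in\mathbb R^{m\times n}$, $B\in\mathbb R^{p\times q}$ and $t=\mathrm{lcm}(n,p)$, $A\ltimes B=(A\otimes I_{t/n})(B\otimes I_{t/p})$; it is associative and coincides with the Kronecker product on column vectors. Swap matrix: $W_{[m,n]}\in\mathbb R^{mn\times mn}$ is the permutation matrix with $W_{[m,n]}(X\otimes Y)=Y\otimes X$ for all $X\in\mathbb R^m$, $Y\in\mathbb R^n$ (so $W_{[1,n]}=W_{[n,1]}=I_n$). $\delta_\kappa^s$ is the $s$-th column of $I_\kappa$. A finite game $G\in\mathcal G_{[n;\kappa]}$ has players $\{1,\dots,n\}$, each with strategy set $\{1,\dots,\kappa\}$, strategy $j$ identified with $\delta_\kappa^j$, and payoffs $c_i$; $V_i^c\in\mathbb R^{\kappa^n}$ is the unique row vector with $c_i(x_1,\dots,x_n)=V_i^c\ltimes x_1\ltimes\cdots\ltimes x_n$ for all $x_j\in\{\delta_\kappa^1,\dots,\delta_\kappa^\kappa\}$. $G$ is skew-symmetric if for every permutation $\sigma\in\mathbf S_n$, every $i$ and every profile, $c_i(x_1,\dots,x_n)=\mathrm{sgn}(\sigma)\,c_{\sigma(i)}(x_{\sigma^{-1}(1)},\dots,x_{\sigma^{-1}(n)})$. *)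

theory Defs
  imports "Jordan_Normal_Form.Matrix" "HOL-Library.FuncSet" "HOL-Combinatorics.Permutations"
begin

definition kron :: "real mat \<Rightarrow> real mat \<Rightarrow> real mat" where
  "kron A B = mat (dim_row A * dim_row B) (dim_col A * dim_col B)
     (\<lambda>(i,j). A $$ (i div dim_row B, j div dim_col B) * B $$ (i mod dim_row B, j mod dim_col B))"

definition stp :: "real mat \<Rightarrow> real mat \<Rightarrow> real mat" where
  "stp A B = (let t = lcm (dim_col A) (dim_row B) in
     kron A (1\<^sub>m (t div dim_col A)) * kron B (1\<^sub>m (t div dim_row B)))"

text \<open>Swap matrix W_[m,n]: the mn x mn permutation matrix with W (X (x) Y) = Y (x) X
  for X in R^m, Y in R^n. Entry (X (x) Y) at index a*n+b equals X_a Y_b, which is entry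
  b*m+a of Y (x) X.\<close>
definition swap_mat :: "nat \<Rightarrow> nat \<Rightarrow> real mat" where
  "swap_mat m n = mat (m*n) (m*n) (\<lambda>(r,c). if r = (c mod n) * m + c div n then 1 else 0)"

definition delta :: "nat \<Rightarrow> nat \<Rightarrow> real mat" where
  "delta k s = mat k 1 (\<lambda>(i,j). if i = s - 1 then 1 else 0)"

definition stp_profile :: "nat \<Rightarrow> nat \<Rightarrow> real mat \<Rightarrow> (nat \<Rightarrow> nat) \<Rightarrow> real mat" where
  "stp_profile n \<kappa> V x = foldl stp V (map (\<lambda>j. delta \<kappa> (x j)) [1..<n+1])"

definition profiles :: "nat \<Rightarrow> nat \<Rightarrow> (nat \<Rightarrow> nat) set" where
  "profiles n \<kappa> = {1..n} \<rightarrow>\<^sub>E {1..\<kappa>}"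

text \<open>Skew-symmetric game with payoffs c i (i in 1..n). The permuted profile
  (x_{sigma^-1(1)},...,x_{sigma^-1(n)}) is x o inv sigma.\<close>
definition skew_symmetric :: "nat \<Rightarrow> nat \<Rightarrow> (nat \<Rightarrow> (nat \<Rightarrow> nat) \<Rightarrow> real) \<Rightarrow> bool" where
  "skew_symmetric n \<kappa> c \<longleftrightarrow>
     (\<forall>\<sigma>. \<sigma> permutes {1..n} \<longrightarrow>
       (\<forall>i\<in>{1..n}. \<forall>x\<in>profiles n \<kappa>.
          c i x = of_int (sign \<sigma>) * c (\<sigma> i) (x \<circ> inv_into UNIV \<sigma>)))"

end

theory Submission
  imports Defs
begin

definition pm :: "nat \<Rightarrow> (nat \<Rightarrow> nat) \<Rightarrow> real mat" where
  "pm N p = mat N N (\<lambda>(r,c). if r = p c then 1 else 0)"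

lemma pm_carrier[simp]: "pm N p \<in> carrier_mat N N"
  by (simp add: pm_def)
lemma pm_dims[simp]: "dim_row (pm N p) = N" "dim_col (pm N p) = N"
  by (simp_all add: pm_def)

lemma swap_pm: "swap_mat m n = pm (m*n) (\<lambda>c. (c mod n)*m + c div n)"
  by (simp add: swap_mat_def pm_def)

lemma one_pm: "1\<^sub>m N = pm N id"
  by (auto simp: pm_def one_mat_def intro!: cong_mat)



lemma row_pm:
  assumes V: "V \<in> carrier_mat 1 N" and c: "c < N" and pc: "p c < N"
  shows "(V * pm N p) $$ (0, c) = V $$ (0, p c)"
proof -
  have "(V * pm N p) $$ (0, c) = (\<Sum>k<N. V $$ (0,k) * (if k = p c then 1 else 0))"
    using V c by (simp add: index_mult_mat scalar_prod_def atLeast0LessThan pm_def)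
  also have "\<dots> = (\<Sum>k<N. if k = p c then V $$ (0,k) else 0)"
    by (rule sum.cong) auto
  also have "\<dots> = V $$ (0, p c)" using pc by (simp add: sum.delta)
  finally show ?thesis .
qed

lemma kron_one1: "kron A (1\<^sub>m 1) = A"
  by (auto simp: kron_def intro!: eq_matI)

lemma kron_one1': "kron A (1\<^sub>m (Suc 0)) = A"
  using kron_one1 by simp

lemma kron_pm:
  assumes k: "0 < k"
  shows "kron (pm N p) (1\<^sub>m k) = pm (N*k) (\<lambda>c. p (c div k) * k + c mod k)"
proof (rule eq_matI)
  fix r c assume r: "r < dim_row (pm (N*k) (\<lambda>c. p (c div k) * k + c mod k))"
    and c: "c < dim_col (pm (N*k) (\<lambda>c. p (c div k) * k + c mod k))"
  have r': "r div k < N" "c div k < N" using r c k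
    by (simp_all add: less_mult_imp_div_less)
  have iff: "(r = p (c div k) * k + c mod k) \<longleftrightarrow> (r div k = p (c div k) \<and> r mod k = c mod k)"
  proof
    assume h: "r = p (c div k) * k + c mod k"
    show "r div k = p (c div k) \<and> r mod k = c mod k" unfolding h using k by simp
  next
    assume "r div k = p (c div k) \<and> r mod k = c mod k"
    thus "r = p (c div k) * k + c mod k" by (metis div_mult_mod_eq)
  qed
  show "kron (pm N p) (1\<^sub>m k) $$ (r, c) = pm (N*k) (\<lambda>c. p (c div k) * k + c mod k) $$ (r, c)"
    using r c r' k by (simp add: kron_def pm_def iff)
qed (simp_all add: kron_def)

lemma pm_mult:
  assumes q: "\<And>c. c < N \<Longrightarrow> q c < N"
  shows "pm N p * pm N q = pm N (p \<circ> q)"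
proof (rule eq_matI)
  fix r c assume r: "r < dim_row (pm N (p \<circ> q))" and c: "c < dim_col (pm N (p \<circ> q))"
  have "(pm N p * pm N q) $$ (r,c) = (\<Sum>k<N. (if r = p k then 1 else 0) * (if k = q c then 1 else 0))"
    using r c by (simp add: index_mult_mat scalar_prod_def atLeast0LessThan pm_def)
  also have "\<dots> = (\<Sum>k<N. if k = q c then (if r = p (q c) then 1 else 0) else 0)"
    by (rule sum.cong) auto
  also have "\<dots> = pm N (p \<circ> q) $$ (r,c)" using q c r by (simp add: sum.delta pm_def)
  finally show "(pm N p * pm N q) $$ (r,c) = pm N (p \<circ> q) $$ (r,c)" .
qed simp_all

lemma stp_eq:
  assumes "dim_col A = dim_row B * k" "0 < dim_row B" "0 < k"
  shows "stp A B = A * kron B (1\<^sub>m k)"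
  using assms by (simp add: stp_def kron_one1' Let_def)

lemma swap_range:
  assumes "c < m*(n::nat)"
  shows "(c mod n)*m + c div n < m*n"
proof -
  have n: "n > 0" using assms by (cases n) auto
  have "c div n < m" using assms by (simp add: less_mult_imp_div_less mult.commute)
  moreover have "c mod n < n" using n by simp
  hence "c mod n \<le> n - 1" by linarith
  hence "(c mod n)*m \<le> (n-1)*m" by simp
  ultimately have "(c mod n)*m + c div n < (n-1)*m + m" by linarith
  also have "\<dots> = m*n" using n by (cases n) auto
  finally show ?thesis .
qed

lemma kron_range:
  assumes p: "\<And>d. d < N \<Longrightarrow> p d < N" and c: "c < N*(k::nat)"
  shows "p (c div k) * k + c mod k < N*k"
proof -
  have k: "k > 0" using c by (cases k) auto
  have "c div k < N" using c by (simp add: less_mult_imp_div_less)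
  hence "p (c div k) \<le> N - 1" using p by fastforce
  hence "p (c div k) * k \<le> (N-1)*k" by simp
  moreover have "c mod k < k" using k by simp
  moreover have "N > 0" using c by (cases N) auto
  ultimately have "p (c div k) * k + c mod k < (N-1)*k + k" by linarith
  also have "\<dots> = N*k" using \<open>N > 0\<close> by (cases N) auto
  finally show ?thesis .
qed


fun encl :: "nat \<Rightarrow> nat list \<Rightarrow> nat" where
  "encl k [] = 0"
| "encl k (a # xs) = (a - 1) * k ^ length xs + encl k xs"

lemma encl_bound:
  assumes "\<forall>a\<in>set xs. 1 \<le> a \<and> a \<le> k"
  shows "encl k xs < k ^ length xs"
  using assms
proof (induction xs)
  case Nil then show ?case by simp
next
  case (Cons a xs)
  have ih: "encl k xs < k ^ length xs" using Cons by simp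
  have a: "a - 1 \<le> k - 1" "1 \<le> a" "a \<le> k" using Cons.prems by auto
  hence "(a - 1) * k ^ length xs \<le> (k - 1) * k ^ length xs" by simp
  moreover have "encl k (a # xs) = (a - 1) * k ^ length xs + encl k xs" by simp
  ultimately have "encl k (a # xs) < (k - 1) * k ^ length xs + k ^ length xs" using ih by linarith
  also have "\<dots> = k ^ length (a # xs)" using a by (cases k) auto
  finally show ?case .
qed

lemma encl_append: "encl k (xs @ ys) = encl k xs * k ^ length ys + encl k ys"
  by (induction xs) (auto simp: algebra_simps power_add)

lemma encl_append_div:
  assumes "\<forall>a\<in>set ys. 1 \<le> a \<and> a \<le> k"
  shows "encl k (xs @ ys) div k ^ length ys = encl k xs"
    and "encl k (xs @ ys) mod k ^ length ys = encl k ys"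
proof -
  have b: "encl k ys < k ^ length ys" using encl_bound[OF assms] .
  hence "k ^ length ys > 0" by linarith
  thus "encl k (xs @ ys) div k ^ length ys = encl k xs"
    and "encl k (xs @ ys) mod k ^ length ys = encl k ys"
    using b by (simp_all add: encl_append)
qed

lemma encl_surj:
  assumes "c < k ^ L"
  shows "\<exists>xs. length xs = L \<and> (\<forall>a\<in>set xs. 1 \<le> a \<and> a \<le> k) \<and> encl k xs = c"
  using assms
proof (induction L arbitrary: c)
  case 0 then show ?case by simp
next
  case (Suc L)
  have kp: "k > 0" using Suc.prems by (cases k) auto
  have d: "c div k ^ L < k" using Suc.prems
    by (simp add: less_mult_imp_div_less mult.commute)
  obtain xs where xs: "length xs = L" "\<forall>a\<in>set xs. 1 \<le> a \<and> a \<le> k" "encl k xs = c mod k ^ L"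
    using Suc.IH[of "c mod k ^ L"] kp by auto
  show ?case
    by (rule exI[of _ "(c div k ^ L + 1) # xs"]) (use xs d in \<open>auto simp: div_mult_mod_eq\<close>)
qed

lemma row_sel:
  fixes V :: "real mat"
  assumes V: "V \<in> carrier_mat 1 N" and c: "c < M" and pc: "f c < N"
  shows "(V * mat N M (\<lambda>(r,c). if r = f c then 1 else 0)) $$ (0, c) = V $$ (0, f c)"
proof -
  have "(V * mat N M (\<lambda>(r,c). if r = f c then 1 else 0)) $$ (0, c)
      = (\<Sum>k<N. V $$ (0,k) * (if k = f c then 1 else 0))"
    using V c by (simp add: index_mult_mat scalar_prod_def atLeast0LessThan)
  also have "\<dots> = (\<Sum>k<N. if k = f c then V $$ (0,k) else 0)"
    by (rule sum.cong) auto
  also have "\<dots> = V $$ (0, f c)" using pc by (simp add: sum.delta)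
  finally show ?thesis by simp
qed

lemma stp_delta:
  assumes V: "V \<in> carrier_mat 1 (k * K)" and s: "1 \<le> s" "s \<le> k" and K: "0 < K"
  shows "stp V (delta k s) \<in> carrier_mat 1 K"
    and "\<And>c. c < K \<Longrightarrow> stp V (delta k s) $$ (0, c) = V $$ (0, (s - 1) * K + c)"
proof -
  have kp: "0 < k" using s by simp
  have kr: "kron (delta k s) (1\<^sub>m K) = mat (k*K) K (\<lambda>(r,c). if r = (s - 1) * K + c then 1 else 0)"
  proof (rule eq_matI)
    fix r c assume r: "r < dim_row (mat (k*K) K (\<lambda>(r,c). if r = (s - 1) * K + c then 1 else 0))"
      and c: "c < dim_col (mat (k*K) K (\<lambda>(r,c). if r = (s - 1) * K + c then 1 else 0))"
    have rk: "r div K < k" using r by (simp add: less_mult_imp_div_less)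
    have iff: "(r = (s - 1) * K + c) \<longleftrightarrow> (r div K = s - 1 \<and> r mod K = c)"
    proof
      assume h: "r = (s - 1) * K + c"
      show "r div K = s - 1 \<and> r mod K = c" unfolding h using c K by simp
    next
      assume "r div K = s - 1 \<and> r mod K = c"
      thus "r = (s - 1) * K + c" by (metis div_mult_mod_eq mult.commute)
    qed
    show "kron (delta k s) (1\<^sub>m K) $$ (r, c) = mat (k*K) K (\<lambda>(r,c). if r = (s - 1) * K + c then 1 else 0) $$ (r, c)"
    proof -
      have "kron (delta k s) (1\<^sub>m K) $$ (r, c) = (if r div K = s - 1 \<and> r mod K = c then 1 else 0)"
        using r c rk K by (simp add: kron_def delta_def)
      also have "\<dots> = (if r = (s - 1) * K + c then 1 else 0)" using iff by simp
      finally show ?thesis using r c by simp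
    qed
  qed (simp_all add: kron_def delta_def)
  have "stp V (delta k s) = V * kron (delta k s) (1\<^sub>m K)"
    by (rule stp_eq) (use V K kp in \<open>simp_all add: delta_def\<close>)
  hence e: "stp V (delta k s) = V * mat (k*K) K (\<lambda>(r,c). if r = (s - 1) * K + c then 1 else 0)"
    using kr by simp
  show "stp V (delta k s) \<in> carrier_mat 1 K" unfolding e using V by simp
  fix c assume c: "c < K"
  have "(s - 1) * K + c < k * K"
  proof -
    have "(s - 1) * K + c < (s - 1) * K + K" using c by simp
    also have "\<dots> = s * K" using s by (cases s) auto
    also have "\<dots> \<le> k * K" using s by simp
    finally show ?thesis .
  qed
  thus "stp V (delta k s) $$ (0, c) = V $$ (0, (s - 1) * K + c)"
    unfolding e using row_sel[OF V c, of "\<lambda>c. (s - 1) * K + c"] by simp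
qed

lemma fold_delta:
  assumes "\<forall>a\<in>set xs. 1 \<le> a \<and> a \<le> k" "0 < m"
    and "V \<in> carrier_mat 1 (k ^ length xs * m)"
  shows "foldl stp V (map (delta k) xs) \<in> carrier_mat 1 m \<and>
    (\<forall>j<m. foldl stp V (map (delta k) xs) $$ (0, j) = V $$ (0, encl k xs * m + j))"
  using assms
proof (induction xs arbitrary: V)
  case Nil then show ?case by simp
next
  case (Cons a xs)
  let ?K = "k ^ length xs * m"
  have a: "1 \<le> a" "a \<le> k" using Cons.prems by auto
  have Kp: "0 < ?K" using a Cons.prems by simp
  have V: "V \<in> carrier_mat 1 (k * ?K)" using Cons.prems by (simp add: mult.assoc)
  note sd = stp_delta[OF V a Kp]
  have IH: "foldl stp (stp V (delta k a)) (map (delta k) xs) \<in> carrier_mat 1 m \<and>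
    (\<forall>j<m. foldl stp (stp V (delta k a)) (map (delta k) xs) $$ (0, j)
         = stp V (delta k a) $$ (0, encl k xs * m + j))"
    using Cons.IH[OF _ Cons.prems(2) sd(1)] Cons.prems(1) by simp
  have eb: "encl k xs < k ^ length xs" using encl_bound Cons.prems(1) by simp
  show ?case
  proof (intro conjI allI impI)
    show "foldl stp V (map (delta k) (a # xs)) \<in> carrier_mat 1 m" using IH by simp
    fix j assume j: "j < m"
    have lt: "encl k xs * m + j < ?K"
    proof -
      have "encl k xs * m + j < encl k xs * m + m" using j by simp
      also have "\<dots> = (encl k xs + 1) * m" by simp
      also have "\<dots> \<le> ?K" using eb by (intro mult_right_mono) auto
      finally show ?thesis .
    qed
    have "foldl stp V (map (delta k) (a # xs)) $$ (0, j) = stp V (delta k a) $$ (0, encl k xs * m + j)"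
      using IH j by simp
    also have "\<dots> = V $$ (0, (a - 1) * ?K + (encl k xs * m + j))" using sd(2)[OF lt] .
    also have "(a - 1) * ?K + (encl k xs * m + j) = encl k (a # xs) * m + j"
      by (simp add: algebra_simps)
    finally show "foldl stp V (map (delta k) (a # xs)) $$ (0, j) = V $$ (0, encl k (a # xs) * m + j)" .
  qed
qed


lemma divmod_aux: "e < (K::nat) \<Longrightarrow> (x * K + e) div K = x" "e < K \<Longrightarrow> (x * K + e) mod K = e"
  by simp_all

definition ok :: "nat \<Rightarrow> nat list \<Rightarrow> bool" where
  "ok k xs \<longleftrightarrow> (\<forall>a\<in>set xs. 1 \<le> a \<and> a \<le> k)"

lemma ok_simps[simp]: "ok k [] = True" "ok k (a # xs) = (1 \<le> a \<and> a \<le> k \<and> ok k xs)"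
  "ok k (xs @ ys) = (ok k xs \<and> ok k ys)"
  by (auto simp: ok_def)

lemma encl_bound': "ok k xs \<Longrightarrow> encl k xs < k ^ length xs"
  using encl_bound ok_def by blast

lemma encl_div': "ok k ys \<Longrightarrow> encl k (xs @ ys) div k ^ length ys = encl k xs"
  "ok k ys \<Longrightarrow> encl k (xs @ ys) mod k ^ length ys = encl k ys"
  using encl_append_div ok_def by blast+

lemma condA_mat:
  fixes V1 :: "real mat"
  assumes k: "0 < k" and V1: "V1 \<in> carrier_mat 1 (k ^ (length ys + length zs + 2))"
  defines "M \<equiv> stp (stp V1 (swap_mat (k ^ length ys) k)) (swap_mat k (k ^ (length ys + 1)))"
  shows "M \<in> carrier_mat 1 (k ^ (length ys + length zs + 2))"
    and "ok k (a # ys @ [b] @ zs) \<Longrightarrow>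
         M $$ (0, encl k (a # ys @ [b] @ zs)) = V1 $$ (0, encl k (b # ys @ [a] @ zs))"
proof -
  let ?p = "length ys" and ?q = "length zs"
  let ?N = "k ^ (?p + ?q + 2)"
  define w1 where "w1 = (\<lambda>c. (c mod k) * k ^ ?p + c div k)"
  define w2 where "w2 = (\<lambda>c. (c mod k ^ (?p + 1)) * k + c div k ^ (?p + 1))"
  define P1 where "P1 = (\<lambda>c. w1 (c div k ^ (?q + 1)) * k ^ (?q + 1) + c mod k ^ (?q + 1))"
  define P2 where "P2 = (\<lambda>c. w2 (c div k ^ ?q) * k ^ ?q + c mod k ^ ?q)"
  have N1: "k ^ ?p * k * k ^ (?q + 1) = ?N" by (simp add: power_add algebra_simps)
  have N2: "k * k ^ (?p + 1) * k ^ ?q = ?N" by (simp add: power_add algebra_simps)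
  have "stp V1 (swap_mat (k ^ ?p) k) = V1 * kron (swap_mat (k ^ ?p) k) (1\<^sub>m (k ^ (?q + 1)))"
    by (rule stp_eq) (use V1 k in \<open>simp_all add: swap_mat_def power_add algebra_simps\<close>)
  also have "\<dots> = V1 * pm ?N P1"
    unfolding swap_pm kron_pm[of "k ^ (?q + 1)", OF zero_less_power[OF k]] N1 P1_def w1_def ..
  finally have S1: "stp V1 (swap_mat (k ^ ?p) k) = V1 * pm ?N P1" .
  have C1: "V1 * pm ?N P1 \<in> carrier_mat 1 ?N" using V1 by simp
  have "M = (V1 * pm ?N P1) * kron (swap_mat k (k ^ (?p + 1))) (1\<^sub>m (k ^ ?q))"
    unfolding M_def S1
    by (rule stp_eq) (use C1 k in \<open>simp_all add: swap_mat_def power_add algebra_simps\<close>)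
  also have "\<dots> = (V1 * pm ?N P1) * pm ?N P2"
    unfolding swap_pm kron_pm[of "k ^ ?q", OF zero_less_power[OF k]] N2 P2_def w2_def ..
  finally have Me: "M = (V1 * pm ?N P1) * pm ?N P2" .
  show "M \<in> carrier_mat 1 ?N" unfolding Me by (rule mult_carrier_mat[OF C1 pm_carrier])
  assume okL: "ok k (a # ys @ [b] @ zs)"
  hence oks: "ok k ys" "ok k zs" "1 \<le> a" "a \<le> k" "1 \<le> b" "b \<le> k" by auto
  have len: "length (a # ys @ [b] @ zs) = ?p + ?q + 2" by simp
  have c_lt: "encl k (a # ys @ [b] @ zs) < ?N" using encl_bound'[OF okL] len by simp
  have okR: "ok k (ys @ [b] @ [a] @ zs)" using oks by simp
  have okT: "ok k (b # ys @ [a] @ zs)" using oks by simp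
  have okb: "ok k (ys @ [b])" using oks by simp
  have "encl k (a # ys @ [b] @ zs) = encl k ((a # ys @ [b]) @ zs)" by simp
  hence d2: "encl k (a # ys @ [b] @ zs) div k ^ ?q = encl k (a # ys @ [b])"
    and m2: "encl k (a # ys @ [b] @ zs) mod k ^ ?q = encl k zs"
    using encl_div'[OF oks(2), of "a # ys @ [b]"] by simp_all
  have e1: "encl k (a # ys @ [b]) = (a - 1) * k ^ (?p + 1) + encl k (ys @ [b])" by simp
  have b1: "encl k (ys @ [b]) < k ^ (?p + 1)" using encl_bound'[OF okb] by simp
  have "w2 (encl k (a # ys @ [b])) = encl k (ys @ [b]) * k + (a - 1)"
    unfolding w2_def e1 by (simp only: divmod_aux[OF b1])
  also have "\<dots> = encl k ((ys @ [b]) @ [a])" by (simp add: encl_append algebra_simps)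
  finally have w2e: "w2 (encl k (a # ys @ [b])) = encl k ((ys @ [b]) @ [a])" .
  have P2e: "P2 (encl k (a # ys @ [b] @ zs)) = encl k (ys @ [b] @ [a] @ zs)"
    unfolding P2_def d2 m2 w2e by (simp add: encl_append algebra_simps)
  have "encl k (ys @ [b] @ [a] @ zs) = encl k ((ys @ [b]) @ (a # zs))" by simp
  hence d1: "encl k (ys @ [b] @ [a] @ zs) div k ^ (?q + 1) = encl k (ys @ [b])"
    and m1: "encl k (ys @ [b] @ [a] @ zs) mod k ^ (?q + 1) = encl k (a # zs)"
    using encl_div'[of k "a # zs" "ys @ [b]"] oks by simp_all
  have e3: "encl k (ys @ [b]) = encl k ys * k + (b - 1)" by (simp add: encl_append algebra_simps)
  have b3: "b - 1 < k" using oks by simp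
  have w1e: "w1 (encl k (ys @ [b])) = encl k (b # ys)"
    unfolding w1_def e3 by (simp only: divmod_aux[OF b3] encl.simps)
  have P1e: "P1 (encl k (ys @ [b] @ [a] @ zs)) = encl k (b # ys @ [a] @ zs)"
    unfolding P1_def d1 m1 w1e by (simp add: encl_append algebra_simps power_add)
  have lt2: "P2 (encl k (a # ys @ [b] @ zs)) < ?N" unfolding P2e using encl_bound'[OF okR] by simp
  have lt1: "P1 (P2 (encl k (a # ys @ [b] @ zs))) < ?N" unfolding P2e P1e
    using encl_bound'[OF okT] by simp
  have "M $$ (0, encl k (a # ys @ [b] @ zs)) = (V1 * pm ?N P1) $$ (0, P2 (encl k (a # ys @ [b] @ zs)))"
    unfolding Me by (rule row_pm[where p=P2, OF C1 c_lt lt2])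
  also have "\<dots> = V1 $$ (0, P1 (P2 (encl k (a # ys @ [b] @ zs))))"
    by (rule row_pm[where p=P1, OF V1 lt2 lt1])
  finally show "M $$ (0, encl k (a # ys @ [b] @ zs)) = V1 $$ (0, encl k (b # ys @ [a] @ zs))"
    unfolding P2e P1e .
qed


lemma condB_mat:
  fixes V1 :: "real mat"
  assumes k: "0 < k" and V1: "V1 \<in> carrier_mat 1 (k ^ (length ys + length zs + 3))"
    and s: "1 \<le> s" "s \<le> k"
  defines "Nm \<equiv> stp (stp V1 (delta k s))
               (1\<^sub>m (k ^ (length ys + length zs + 2)) +
                kron (stp (swap_mat (k ^ (length ys + 1)) k) (swap_mat k (k ^ length ys)))
                     (1\<^sub>m (k ^ length zs)))"
  shows "Nm \<in> carrier_mat 1 (k ^ (length ys + length zs + 2))"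
    and "ok k (b # ys @ [d] @ zs) \<Longrightarrow>
         Nm $$ (0, encl k (b # ys @ [d] @ zs)) =
           V1 $$ (0, encl k (s # b # ys @ [d] @ zs)) + V1 $$ (0, encl k (s # d # ys @ [b] @ zs))"
proof -
  let ?p = "length ys" and ?q = "length zs"
  let ?K = "k ^ (?p + ?q + 2)"
  let ?L = "k ^ (?p + 2)"
  define w1 where "w1 = (\<lambda>c. (c mod k) * k ^ (?p + 1) + c div k)"
  define w2 where "w2 = (\<lambda>c. (c mod k ^ ?p) * k + c div k ^ ?p)"
  define p2 where "p2 = (\<lambda>c. w2 (c div k) * k + c mod k)"
  define P where "P = (\<lambda>c. (w1 \<circ> p2) (c div k ^ ?q) * k ^ ?q + c mod k ^ ?q)"
  have e3: "?p + ?q + 3 = Suc (?p + ?q + 2)" by simp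
  have V1': "V1 \<in> carrier_mat 1 (k * ?K)" using V1 unfolding e3 power_Suc .
  have Kp: "0 < ?K" using k by simp
  define R where "R = stp V1 (delta k s)"
  have R: "R \<in> carrier_mat 1 ?K" using stp_delta(1)[OF V1' s Kp] R_def by simp
  have Rc: "\<And>c. c < ?K \<Longrightarrow> R $$ (0, c) = V1 $$ (0, (s - 1) * ?K + c)"
    using stp_delta(2)[OF V1' s Kp] R_def by simp
  have L1: "k ^ (?p + 1) * k = ?L" by (simp add: algebra_simps)
  have L2: "k * k ^ ?p * k = ?L" by (simp add: algebra_simps)
  have W1: "swap_mat (k ^ (?p + 1)) k = pm ?L w1" unfolding swap_pm L1 w1_def ..
  have W2: "kron (swap_mat k (k ^ ?p)) (1\<^sub>m k) = pm ?L p2"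
    unfolding swap_pm kron_pm[OF k] L2 p2_def w2_def ..
  have p2r: "\<And>c. c < ?L \<Longrightarrow> p2 c < ?L"
  proof -
    fix c assume c: "c < ?L"
    have "p2 c < k * k ^ ?p * k" unfolding p2_def
    proof (rule kron_range)
      show "c < k * k ^ ?p * k" using c L2 by (simp add: algebra_simps)
      fix d assume "d < k * k ^ ?p" thus "w2 d < k * k ^ ?p" unfolding w2_def by (rule swap_range)
    qed
    thus "p2 c < ?L" using L2 by simp
  qed
  have "stp (swap_mat (k ^ (?p + 1)) k) (swap_mat k (k ^ ?p)) =
        swap_mat (k ^ (?p + 1)) k * kron (swap_mat k (k ^ ?p)) (1\<^sub>m k)"
    by (rule stp_eq) (use k in \<open>simp_all add: swap_mat_def algebra_simps\<close>)
  also have "\<dots> = pm ?L (w1 \<circ> p2)" unfolding W1 W2 by (rule pm_mult[OF p2r])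
  finally have Q: "stp (swap_mat (k ^ (?p + 1)) k) (swap_mat k (k ^ ?p)) = pm ?L (w1 \<circ> p2)" .
  have LK: "?L * k ^ ?q = ?K" by (simp add: power_add algebra_simps)
  have KP: "kron (stp (swap_mat (k ^ (?p + 1)) k) (swap_mat k (k ^ ?p))) (1\<^sub>m (k ^ ?q)) = pm ?K P"
    unfolding Q kron_pm[of "k ^ ?q", OF zero_less_power[OF k]] LK P_def ..
  have "Nm = stp R (1\<^sub>m ?K + pm ?K P)" unfolding Nm_def R_def KP ..
  also have "\<dots> = R * kron (1\<^sub>m ?K + pm ?K P) (1\<^sub>m 1)"
    by (rule stp_eq) (use R Kp in simp_all)
  also have "\<dots> = R * (1\<^sub>m ?K + pm ?K P)" by (simp only: kron_one1)
  also have "\<dots> = R * 1\<^sub>m ?K + R * pm ?K P"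
    by (rule mult_add_distrib_mat[OF R]) auto
  also have "\<dots> = R + R * pm ?K P" using R by simp
  finally have Ne: "Nm = R + R * pm ?K P" .
  show "Nm \<in> carrier_mat 1 ?K" unfolding Ne using R by simp
  assume okL: "ok k (b # ys @ [d] @ zs)"
  hence oks: "ok k ys" "ok k zs" "1 \<le> b" "b \<le> k" "1 \<le> d" "d \<le> k" by auto
  have c_lt: "encl k (b # ys @ [d] @ zs) < ?K" using encl_bound'[OF okL] by simp
  have okT: "ok k (d # ys @ [b] @ zs)" using oks by simp
  have "encl k (b # ys @ [d] @ zs) = encl k ((b # ys @ [d]) @ zs)" by simp
  hence d0: "encl k (b # ys @ [d] @ zs) div k ^ ?q = encl k (b # ys @ [d])"
    and m0: "encl k (b # ys @ [d] @ zs) mod k ^ ?q = encl k zs"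
    using encl_div'[OF oks(2), of "b # ys @ [d]"] by simp_all
  have e1: "encl k (b # ys @ [d]) = encl k (b # ys) * k + (d - 1)" by (simp add: encl_append algebra_simps)
  have bd: "d - 1 < k" using oks by simp
  have p2a: "p2 (encl k (b # ys @ [d])) = w2 (encl k (b # ys)) * k + (d - 1)"
    unfolding p2_def e1 by (simp only: divmod_aux[OF bd])
  have e2: "encl k (b # ys) = (b - 1) * k ^ ?p + encl k ys" by simp
  have by': "encl k ys < k ^ ?p" using encl_bound'[OF oks(1)] .
  have w2a: "w2 (encl k (b # ys)) = encl k ys * k + (b - 1)"
    unfolding w2_def e2 by (simp only: divmod_aux[OF by'])
  have p2e: "p2 (encl k (b # ys @ [d])) = encl k (ys @ [b]) * k + (d - 1)"
    unfolding p2a w2a by (simp add: encl_append)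
  have b3: "b - 1 < k" using oks by simp
  have eb: "encl k (ys @ [b]) < k ^ (?p + 1)" using encl_bound'[of k "ys @ [b]"] oks by simp
  have w1e: "w1 (encl k (ys @ [b]) * k + (d - 1)) = encl k (d # ys @ [b])"
    unfolding w1_def by (simp only: divmod_aux[OF bd]) simp
  have Pe: "P (encl k (b # ys @ [d] @ zs)) = encl k (d # ys @ [b] @ zs)"
    unfolding P_def d0 m0 o_def p2e w1e by (simp add: encl_append algebra_simps power_add)
  have lt2: "P (encl k (b # ys @ [d] @ zs)) < ?K" unfolding Pe using encl_bound'[OF okT] by simp
  have "Nm $$ (0, encl k (b # ys @ [d] @ zs)) =
        R $$ (0, encl k (b # ys @ [d] @ zs)) + (R * pm ?K P) $$ (0, encl k (b # ys @ [d] @ zs))"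
    unfolding Ne using R c_lt by simp
  also have "(R * pm ?K P) $$ (0, encl k (b # ys @ [d] @ zs)) = R $$ (0, P (encl k (b # ys @ [d] @ zs)))"
    by (rule row_pm[where p=P, OF R c_lt lt2])
  also have "R $$ (0, P (encl k (b # ys @ [d] @ zs))) = V1 $$ (0, encl k (s # d # ys @ [b] @ zs))"
    unfolding Pe Rc[OF lt2[unfolded Pe]] by simp
  also have "R $$ (0, encl k (b # ys @ [d] @ zs)) = V1 $$ (0, encl k (s # b # ys @ [d] @ zs))"
    unfolding Rc[OF c_lt] by simp
  finally show "Nm $$ (0, encl k (b # ys @ [d] @ zs)) =
           V1 $$ (0, encl k (s # b # ys @ [d] @ zs)) + V1 $$ (0, encl k (s # d # ys @ [b] @ zs))" .
qed


lemma prof_comp: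
  assumes y: "y \<in> profiles n k" and t: "t permutes {1..n}"
  shows "y \<circ> t \<in> profiles n k"
proof -
  have "\<forall>j\<in>{1..n}. (y \<circ> t) j \<in> {1..k}"
    using y permutes_in_image[OF t] by (auto simp: profiles_def PiE_iff)
  moreover have "\<forall>j. j \<notin> {1..n} \<longrightarrow> (y \<circ> t) j = undefined"
    using y permutes_not_in[OF t] by (auto simp: profiles_def PiE_iff extensional_def)
  ultimately show ?thesis by (auto simp: profiles_def PiE_iff extensional_def)
qed

lemma permutes_remove_fixed:
  assumes "p permutes S" "p a = a"
  shows "p permutes (S - {a})"
  using assms unfolding permutes_def by auto

lemma skew_iff:
  assumes n2: "2 \<le> n"
  shows "skew_symmetric n k c \<longleftrightarrow>
    (\<forall>i\<in>{2..n}. \<forall>y\<in>profiles n k. c i y = - c 1 (y \<circ> Transposition.transpose 1 i)) \<and>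
    (\<forall>i\<in>{3..n}. \<forall>y\<in>profiles n k. c 1 y + c 1 (y \<circ> Transposition.transpose 2 i) = 0)"
  (is "?S \<longleftrightarrow> ?A \<and> ?B")
proof
  assume S: ?S
  show "?A \<and> ?B"
  proof
    show ?A
    proof (intro ballI)
      fix i y assume i: "i \<in> {2..n}" and y: "y \<in> profiles n k"
      let ?t = "Transposition.transpose (1::nat) i"
      have tp: "?t permutes {1..n}" using i by (intro permutes_swap_id) auto
      have x: "y \<circ> ?t \<in> profiles n k" by (rule prof_comp[OF y tp])
      have "c 1 (y \<circ> ?t) = of_int (sign ?t) * c (?t 1) ((y \<circ> ?t) \<circ> inv_into UNIV ?t)"
        using S tp x n2 unfolding skew_symmetric_def by auto
      also have "\<dots> = - c i y" using i by (simp add: sign_swap_id o_assoc[symmetric])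
      finally show "c i y = - c 1 (y \<circ> ?t)" by simp
    qed
    show ?B
    proof (intro ballI)
      fix i y assume i: "i \<in> {3..n}" and y: "y \<in> profiles n k"
      let ?t = "Transposition.transpose (2::nat) i"
      have tp: "?t permutes {1..n}" using i by (intro permutes_swap_id) auto
      have "c 1 y = of_int (sign ?t) * c (?t 1) (y \<circ> inv_into UNIV ?t)"
        using S tp y n2 unfolding skew_symmetric_def by auto
      also have "\<dots> = - c 1 (y \<circ> ?t)" using i by (simp add: sign_swap_id)
      finally show "c 1 y + c 1 (y \<circ> ?t) = 0" by simp
    qed
  qed
next
  assume AB: "?A \<and> ?B"
  hence A: ?A and B: ?B by auto
  let ?T = "Transposition.transpose"
  have T: "c 1 (x \<circ> ?T a b) = - c 1 x"
    if ab: "a \<in> {2..n}" "b \<in> {2..n}" "a \<noteq> b" and x: "x \<in> profiles n k" for a b x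
  proof -
    have B': "c 1 (z \<circ> ?T 2 j) = - c 1 z" if "j \<in> {3..n}" "z \<in> profiles n k" for j z
      using B that by force
    have pj: "\<And>j. j \<in> {2..n} \<Longrightarrow> ?T 2 j permutes {1..n}" by (intro permutes_swap_id) auto
    consider "a = 2" | "b = 2" | "a \<noteq> 2" "b \<noteq> 2" by blast
    then show ?thesis
    proof cases
      case 1 thus ?thesis using ab x B' by auto
    next
      case 2 thus ?thesis using ab x B' by (auto simp: transpose_commute)
    next
      case 3
      have a3: "a \<in> {3..n}" and b3: "b \<in> {3..n}" using ab 3 by auto
      have eq: "?T a b = ?T 2 a \<circ> ?T 2 b \<circ> ?T 2 a"
        using 3 ab by (auto simp: fun_eq_iff transpose_def)
      have x1: "x \<circ> ?T 2 a \<in> profiles n k" by (rule prof_comp[OF x pj]) (use ab in auto)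
      have x2: "x \<circ> ?T 2 a \<circ> ?T 2 b \<in> profiles n k" by (rule prof_comp[OF x1 pj]) (use ab in auto)
      have "c 1 (x \<circ> ?T a b) = c 1 ((x \<circ> ?T 2 a \<circ> ?T 2 b) \<circ> ?T 2 a)"
        unfolding eq by (simp add: o_assoc)
      also have "\<dots> = - c 1 (x \<circ> ?T 2 a \<circ> ?T 2 b)" by (rule B'[OF a3 x2])
      also have "\<dots> = c 1 (x \<circ> ?T 2 a)" using B'[OF b3 x1] by simp
      also have "\<dots> = - c 1 x" by (rule B'[OF a3 x])
      finally show ?thesis .
    qed
  qed
  have P: "\<forall>x\<in>profiles n k. c 1 (x \<circ> p) = of_int (sign p) * c 1 x"
    if p: "p permutes {2..n}" for p
    using p finite_atLeastAtMost
  proof (induction rule: permutes_induct)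
    case id then show ?case by simp
  next
    case (swap a b p)
    show ?case
    proof
      fix x assume x: "x \<in> profiles n k"
      have tp: "?T a b permutes {1..n}" using swap by (intro permutes_swap_id) auto
      have x1: "x \<circ> ?T a b \<in> profiles n k" by (rule prof_comp[OF x tp])
      have "c 1 (x \<circ> (?T a b \<circ> p)) = c 1 ((x \<circ> ?T a b) \<circ> p)" by (simp add: o_assoc)
      also have "\<dots> = of_int (sign p) * c 1 (x \<circ> ?T a b)" using swap.IH x1 by blast
      also have "\<dots> = - of_int (sign p) * c 1 x" using T[OF swap(1,2,3) x] by simp
      also have "sign (?T a b \<circ> p) = - sign p"
      proof -
        have pp: "permutation p" using swap permutes_imp_permutation[of "{2..n}" p] by auto
        have "sign (?T a b \<circ> p) = sign (?T a b) * sign p"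
          by (rule sign_compose[OF permutation_swap_id pp])
        thus ?thesis using swap(3) by (simp add: sign_swap_id)
      qed
      hence "- of_int (sign p) * c 1 x = of_int (sign (?T a b \<circ> p)) * c 1 x" by simp
      finally show "c 1 (x \<circ> (?T a b \<circ> p)) = of_int (sign (?T a b \<circ> p)) * c 1 x" .
    qed
  qed
  have A': "c i y = of_int (sign (?T 1 i)) * c 1 (y \<circ> ?T 1 i)"
    if "i \<in> {1..n}" "y \<in> profiles n k" for i y
  proof (cases "i = 1")
    case True thus ?thesis by simp
  next
    case False thus ?thesis using A that by (auto simp: sign_swap_id)
  qed
  show ?S unfolding skew_symmetric_def
  proof (intro allI impI ballI)
    fix \<sigma> i x assume \<sigma>: "\<sigma> permutes {1..n}" and i: "i \<in> {1..n}" and x: "x \<in> profiles n k"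
    define ti where "ti = ?T 1 i"
    define tj where "tj = ?T 1 (\<sigma> i)"
    have si: "\<sigma> i \<in> {1..n}" using permutes_in_image[OF \<sigma>] i by simp
    have ti_p: "ti permutes {1..n}" unfolding ti_def using i n2 by (intro permutes_swap_id) auto
    have tj_p: "tj permutes {1..n}" unfolding tj_def using si n2 by (intro permutes_swap_id) auto
    have is_p: "inv_into UNIV \<sigma> permutes {1..n}" by (rule permutes_inv[OF \<sigma>])
    define \<rho> where "\<rho> = ti \<circ> inv_into UNIV \<sigma> \<circ> tj"
    have pi_p: "\<rho> permutes {1..n}" unfolding \<rho>_def
      by (intro permutes_compose ti_p tj_p is_p)
    have pi1: "\<rho> 1 = 1" unfolding \<rho>_def ti_def tj_def
      using permutes_inverses(2)[OF \<sigma>] by simp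
    have pi_p2: "\<rho> permutes {2..n}"
    proof -
      have "\<rho> permutes ({1..n} - {1})" by (rule permutes_remove_fixed[OF pi_p pi1])
      moreover have "{1..n} - {1} = {2..(n::nat)}" by auto
      ultimately show ?thesis by simp
    qed
    have fin: "finite {1..n::nat}" by simp
    have perm: "permutation ti" "permutation tj" "permutation (inv_into UNIV \<sigma>)" "permutation \<sigma>"
      using ti_p tj_p is_p \<sigma> permutes_imp_permutation[OF fin] by blast+
    have sign_pi: "sign \<rho> = sign ti * sign \<sigma> * sign tj"
      unfolding \<rho>_def using perm
      by (simp add: sign_compose permutation_compose sign_inverse)
    have xi: "x \<circ> ti \<in> profiles n k" by (rule prof_comp[OF x ti_p])
    have xs: "x \<circ> inv_into UNIV \<sigma> \<in> profiles n k" by (rule prof_comp[OF x is_p])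
    have comp: "x \<circ> inv_into UNIV \<sigma> \<circ> tj = (x \<circ> ti) \<circ> \<rho>"
      unfolding \<rho>_def ti_def by (simp add: fun_eq_iff)
    have "of_int (sign \<sigma>) * c (\<sigma> i) (x \<circ> inv_into UNIV \<sigma>)
        = of_int (sign \<sigma>) * (of_int (sign tj) * c 1 (x \<circ> inv_into UNIV \<sigma> \<circ> tj))"
      using A'[OF si xs] unfolding tj_def by simp
    also have "\<dots> = of_int (sign \<sigma>) * (of_int (sign tj) * (of_int (sign \<rho>) * c 1 (x \<circ> ti)))"
      unfolding comp using P[OF pi_p2] xi by simp
    also have "\<dots> = of_int (sign \<sigma> * sign \<sigma> * (sign tj * sign tj) * sign ti) * c 1 (x \<circ> ti)"
      unfolding sign_pi by (simp only: of_int_mult mult_ac)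
    also have "\<dots> = of_int (sign ti) * c 1 (x \<circ> ti)" by simp
    also have "\<dots> = c i x" using A'[OF i x] unfolding ti_def by simp
    finally show "c i x = of_int (sign \<sigma>) * c (\<sigma> i) (x \<circ> inv_into UNIV \<sigma>)" by simp
  qed
qed


lemma okP: "y \<in> profiles n k \<Longrightarrow> ok k (map y [1..<n+1])"
  by (auto simp: ok_def profiles_def PiE_iff)

lemma list_prof:
  assumes "length L = n" "ok k L"
  shows "\<exists>y\<in>profiles n k. map y [1..<n+1] = L"
proof -
  define y where "y = (\<lambda>j. if j \<in> {1..n} then L ! (j - 1) else undefined)"
  have "y \<in> profiles n k"
    using assms unfolding profiles_def y_def ok_def
    by (auto simp: PiE_iff extensional_def)
  moreover have "map y [1..<n+1] = L"
    using assms by (intro nth_equalityI) (auto simp del: upt_Suc simp: y_def nth_upt)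
  ultimately show ?thesis by blast
qed

lemma cV:
  assumes k: "0 < k" and V: "V \<in> carrier_mat 1 (k ^ n)" and y: "y \<in> profiles n k"
  shows "stp_profile n k V y $$ (0, 0) = V $$ (0, encl k (map y [1..<n+1]))"
proof -
  have e: "stp_profile n k V y = foldl stp V (map (delta k) (map y [1..<n+1]))"
    unfolding stp_profile_def by (simp add: o_def)
  have V': "V \<in> carrier_mat 1 (k ^ length (map y [1..<n+1]) * 1)" using V by (simp del: upt_Suc)
  have "foldl stp V (map (delta k) (map y [1..<n+1])) $$ (0, 0) = V $$ (0, encl k (map y [1..<n+1]) * 1 + 0)"
    using fold_delta[OF okP[OF y, unfolded ok_def] _ V'] by simp
  thus ?thesis unfolding e by simp
qed

lemma upt_split3:
  assumes "a < b" "b \<le> m"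
  shows "[a..<m+1] = a # [a+1..<b] @ [b] @ [b+1..<m+1]"
proof -
  have "[a..<m+1] = [a..<b] @ [b..<m+1]" using assms upt_add_eq_append[of a b "m + 1 - b"] by simp
  also have "[a..<b] = a # [a+1..<b]" using assms upt_conv_Cons by simp
  also have "[b..<m+1] = b # [b+1..<m+1]" using assms upt_conv_Cons by simp
  finally show ?thesis by simp
qed

lemma map_tr:
  assumes "a < b" "b \<le> m"
  shows "map (y \<circ> Transposition.transpose a b) [a..<m+1] = y b # map y [a+1..<b] @ [y a] @ map y [b+1..<m+1]"
proof -
  have 1: "map (y \<circ> Transposition.transpose a b) [a+1..<b] = map y [a+1..<b]"
    by (rule map_cong) auto
  have 2: "map (y \<circ> Transposition.transpose a b) [b+1..<m+1] = map y [b+1..<m+1]"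
    by (rule map_cong) (use assms in auto)
  show ?thesis unfolding upt_split3[OF assms] using 1 2 by simp
qed


theorem theorem3p10:
  fixes n \<kappa> :: nat
    and c :: "nat \<Rightarrow> (nat \<Rightarrow> nat) \<Rightarrow> real"
    and V :: "nat \<Rightarrow> real mat"
  assumes n2: "n \<ge> 2" and k1: "\<kappa> \<ge> 1"
    and Vdim: "\<forall>i\<in>{1..n}. V i \<in> carrier_mat 1 (\<kappa> ^ n)"
    and Vrep: "\<forall>i\<in>{1..n}. \<forall>x\<in>profiles n \<kappa>. c i x = stp_profile n \<kappa> (V i) x $$ (0, 0)"
  defines "condA \<equiv> (\<forall>i\<in>{2..n}.
             V i = - stp (stp (V 1) (swap_mat (\<kappa> ^ (i - 2)) \<kappa>)) (swap_mat \<kappa> (\<kappa> ^ (i - 1))))"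
    and "condB \<equiv> (\<forall>s\<in>{1..\<kappa>}. \<forall>i\<in>{3..n}.
             stp (stp (V 1) (delta \<kappa> s))
               (1\<^sub>m (\<kappa> ^ (n - 1)) +
                kron (stp (swap_mat (\<kappa> ^ (i - 2)) \<kappa>) (swap_mat \<kappa> (\<kappa> ^ (i - 3))))
                     (1\<^sub>m (\<kappa> ^ (n - i))))
             = 0\<^sub>m 1 (\<kappa> ^ (n - 1)))"
  shows "(n = 2 \<longrightarrow> (skew_symmetric n \<kappa> c \<longleftrightarrow> condA))
       \<and> (n > 2 \<longrightarrow> (skew_symmetric n \<kappa> c \<longleftrightarrow> condA \<and> condB))"
proof -
  have k0: "0 < \<kappa>" using k1 by simp
  let ?T = "Transposition.transpose"
  define E where "E y = encl \<kappa> (map y [1..<n+1])" for y :: "nat \<Rightarrow> nat"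
  have V1: "V 1 \<in> carrier_mat 1 (\<kappa> ^ n)" using Vdim n2 by auto
  have cE: "c i y = V i $$ (0, E y)" if "i \<in> {1..n}" "y \<in> profiles n \<kappa>" for i y
    using Vrep Vdim that cV[OF k0] unfolding E_def by auto
  have Elt: "E y < \<kappa> ^ n" if "y \<in> profiles n \<kappa>" for y
    using encl_bound'[OF okP[OF that]] unfolding E_def by (simp del: upt_Suc)
  have Esurj: "\<exists>y\<in>profiles n \<kappa>. E y = j" if jl: "j < \<kappa> ^ n" for j
  proof -
    obtain L where L: "length L = n" "ok \<kappa> L" "encl \<kappa> L = j"
      using encl_surj[OF jl] unfolding ok_def by blast
    then obtain y where "y \<in> profiles n \<kappa>" "map y [1..<n+1] = L" using list_prof by blast
    thus ?thesis using L unfolding E_def by blast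
  qed
  define M where "M i = stp (stp (V 1) (swap_mat (\<kappa> ^ (i - 2)) \<kappa>)) (swap_mat \<kappa> (\<kappa> ^ (i - 1)))" for i
  have Mfact: "M i \<in> carrier_mat 1 (\<kappa> ^ n) \<and>
      (\<forall>y\<in>profiles n \<kappa>. M i $$ (0, E y) = V 1 $$ (0, E (y \<circ> ?T 1 i)))"
    if i: "i \<in> {2..n}" for i
  proof -
    have h1: "i - 2 + 1 = i - 1" "i - 2 + (n - i) + 2 = n" using i by auto
    have Mc: "M i \<in> carrier_mat 1 (\<kappa> ^ n)"
    proof -
      let ?ys = "replicate (i - 2) (1::nat)" and ?zs = "replicate (n - i) (1::nat)"
      have "V 1 \<in> carrier_mat 1 (\<kappa> ^ (length ?ys + length ?zs + 2))"
        using V1 unfolding length_replicate h1(2) .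
      from condA_mat(1)[OF k0 this] show ?thesis unfolding M_def length_replicate h1 .
    qed
    moreover have "M i $$ (0, E y) = V 1 $$ (0, E (y \<circ> ?T 1 i))" if y: "y \<in> profiles n \<kappa>" for y
    proof -
      define ys where "ys = map y [2..<i]"
      define zs where "zs = map y [i+1..<n+1]"
      have ly: "length ys = i - 2" "length zs = n - i" unfolding ys_def zs_def by auto
      have V1': "V 1 \<in> carrier_mat 1 (\<kappa> ^ (length ys + length zs + 2))"
        using V1 unfolding ly h1(2) .
      have i1: "1 < i" "i \<le> n" using i by auto
      have l1: "map y [1..<n+1] = y 1 # ys @ [y i] @ zs"
        unfolding ys_def zs_def upt_split3[OF i1, unfolded one_add_one]
        by (simp only: list.map map_append)
      have l2: "map (y \<circ> ?T 1 i) [1..<n+1] = y i # ys @ [y 1] @ zs"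
        unfolding ys_def zs_def by (rule map_tr[OF i1, unfolded one_add_one])
      have okl: "ok \<kappa> (y 1 # ys @ [y i] @ zs)" using okP[OF y] l1 by simp
      have "M i $$ (0, encl \<kappa> (y 1 # ys @ [y i] @ zs)) = V 1 $$ (0, encl \<kappa> (y i # ys @ [y 1] @ zs))"
        using condA_mat(2)[OF k0 V1' okl] unfolding M_def ly h1 .
      thus ?thesis unfolding E_def l1 l2 .
    qed
    ultimately show ?thesis by blast
  qed
  have Aiff: "condA \<longleftrightarrow> (\<forall>i\<in>{2..n}. \<forall>y\<in>profiles n \<kappa>. c i y = - c 1 (y \<circ> ?T 1 i))"
  proof
    assume cA: condA
    show "\<forall>i\<in>{2..n}. \<forall>y\<in>profiles n \<kappa>. c i y = - c 1 (y \<circ> ?T 1 i)"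
    proof (intro ballI)
      fix i y assume i: "i \<in> {2..n}" and y: "y \<in> profiles n \<kappa>"
      have Vi: "V i = - M i" using cA i unfolding condA_def M_def by blast
      have tp: "?T 1 i permutes {1..n}" using i by (intro permutes_swap_id) auto
      have "c i y = V i $$ (0, E y)" using cE i y by auto
      also have "\<dots> = - (M i $$ (0, E y))" unfolding Vi using conjunct1[OF Mfact[OF i]] Elt[OF y] by simp
      also have "\<dots> = - c 1 (y \<circ> ?T 1 i)"
        using Mfact[OF i] y cE[of 1 "y \<circ> ?T 1 i"] prof_comp[OF y tp] n2 by auto
      finally show "c i y = - c 1 (y \<circ> ?T 1 i)" .
    qed
  next
    assume hA: "\<forall>i\<in>{2..n}. \<forall>y\<in>profiles n \<kappa>. c i y = - c 1 (y \<circ> ?T 1 i)"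
    show condA unfolding condA_def M_def[symmetric]
    proof (intro ballI)
      fix i assume i: "i \<in> {2..n}"
      have tp: "?T 1 i permutes {1..n}" using i by (intro permutes_swap_id) auto
      have Mc: "M i \<in> carrier_mat 1 (\<kappa> ^ n)" using Mfact[OF i] by blast
      have Vi: "V i \<in> carrier_mat 1 (\<kappa> ^ n)" using Vdim i by auto
      show "V i = - M i"
      proof (rule eq_matI)
        fix r j assume r: "r < dim_row (- M i)" and j: "j < dim_col (- M i)"
        have r0: "r = 0" and j': "j < \<kappa> ^ n" using r j Mc by auto
        obtain y where y: "y \<in> profiles n \<kappa>" "E y = j" using Esurj[OF j'] by blast
        have "V i $$ (0, j) = c i y" using cE i y by auto
        also have "\<dots> = - c 1 (y \<circ> ?T 1 i)" using hA i y by blast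
        also have "\<dots> = - (M i $$ (0, j))"
          using Mfact[OF i] y cE[of 1 "y \<circ> ?T 1 i"] prof_comp[OF y(1) tp] n2 by auto
        also have "\<dots> = (- M i) $$ (0, j)" using Mc j' by simp
        finally show "V i $$ (r, j) = (- M i) $$ (r, j)" using r0 by simp
      qed (use Mc Vi in auto)
    qed
  qed
  define Nm where "Nm s i = stp (stp (V 1) (delta \<kappa> s))
               (1\<^sub>m (\<kappa> ^ (n - 1)) +
                kron (stp (swap_mat (\<kappa> ^ (i - 2)) \<kappa>) (swap_mat \<kappa> (\<kappa> ^ (i - 3))))
                     (1\<^sub>m (\<kappa> ^ (n - i))))" for s i
  have hu: "[1..<n+1] = 1 # [2..<n+1]"
    using upt_conv_Cons[of 1 "n+1"] n2 by (simp del: upt_Suc add: numeral_2_eq_2)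
  have Nfact: "Nm s i \<in> carrier_mat 1 (\<kappa> ^ (n - 1)) \<and>
      (\<forall>y\<in>profiles n \<kappa>. y 1 = s \<longrightarrow>
         Nm s i $$ (0, encl \<kappa> (map y [2..<n+1])) = V 1 $$ (0, E y) + V 1 $$ (0, E (y \<circ> ?T 2 i)))"
    if s: "s \<in> {1..\<kappa>}" and i: "i \<in> {3..n}" for s i
  proof -
    have h1: "i - 3 + 1 = i - 2" "i - 3 + (n - i) + 2 = n - 1" "i - 3 + (n - i) + 3 = n" using i by auto
    have s1: "1 \<le> s" "s \<le> \<kappa>" using s by auto
    have Nc: "Nm s i \<in> carrier_mat 1 (\<kappa> ^ (n - 1))"
    proof -
      let ?ys = "replicate (i - 3) (1::nat)" and ?zs = "replicate (n - i) (1::nat)"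
      have "V 1 \<in> carrier_mat 1 (\<kappa> ^ (length ?ys + length ?zs + 3))"
        using V1 unfolding length_replicate h1(3) .
      from condB_mat(1)[OF k0 this s1] show ?thesis unfolding Nm_def length_replicate h1 .
    qed
    moreover have "Nm s i $$ (0, encl \<kappa> (map y [2..<n+1])) = V 1 $$ (0, E y) + V 1 $$ (0, E (y \<circ> ?T 2 i))"
      if y: "y \<in> profiles n \<kappa>" and ys1: "y 1 = s" for y
    proof -
      define ys where "ys = map y [3..<i]"
      define zs where "zs = map y [i+1..<n+1]"
      have ly: "length ys = i - 3" "length zs = n - i" unfolding ys_def zs_def by auto
      have V1': "V 1 \<in> carrier_mat 1 (\<kappa> ^ (length ys + length zs + 3))"
        using V1 unfolding ly h1(3) .
      have i1: "2 < i" "i \<le> n" using i by auto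
      have t3: "(2::nat) + 1 = 3" by simp
      have l1: "map y [2..<n+1] = y 2 # ys @ [y i] @ zs"
        unfolding ys_def zs_def upt_split3[OF i1, unfolded t3]
        by (simp only: list.map map_append)
      have l2: "map (y \<circ> ?T 2 i) [2..<n+1] = y i # ys @ [y 2] @ zs"
        unfolding ys_def zs_def by (rule map_tr[OF i1, unfolded t3])
      have E1: "E y = encl \<kappa> (s # y 2 # ys @ [y i] @ zs)"
        unfolding E_def hu l1[symmetric] ys1[symmetric] by (simp only: list.map)
      have E2: "E (y \<circ> ?T 2 i) = encl \<kappa> (s # y i # ys @ [y 2] @ zs)"
      proof -
        have "?T 2 i 1 = 1" using i by (intro transpose_apply_other) auto
        hence "(y \<circ> ?T 2 i) 1 = s" using ys1 by simp
        thus ?thesis unfolding E_def hu l2[symmetric] by (simp only: list.map)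
      qed
      have okt: "ok \<kappa> (map y [2..<n+1])" using okP[OF y] unfolding hu by (simp del: upt_Suc)
      have okl: "ok \<kappa> (y 2 # ys @ [y i] @ zs)"
        using okt unfolding l1 .
      have "Nm s i $$ (0, encl \<kappa> (y 2 # ys @ [y i] @ zs)) =
          V 1 $$ (0, encl \<kappa> (s # y 2 # ys @ [y i] @ zs)) + V 1 $$ (0, encl \<kappa> (s # y i # ys @ [y 2] @ zs))"
        using condB_mat(2)[OF k0 V1' s1 okl] unfolding Nm_def ly h1 .
      thus ?thesis unfolding l1 E1 E2 .
    qed
    ultimately show ?thesis by blast
  qed
  have Tsurj: "\<exists>y\<in>profiles n \<kappa>. y 1 = s \<and> encl \<kappa> (map y [2..<n+1]) = j"
    if s: "s \<in> {1..\<kappa>}" and jl: "j < \<kappa> ^ (n - 1)" for s j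
  proof -
    obtain L where L: "length L = n - 1" "ok \<kappa> L" "encl \<kappa> L = j"
      using encl_surj[OF jl] unfolding ok_def by blast
    have l1: "length (s # L) = n" using L(1) n2 by simp
    have l2: "ok \<kappa> (s # L)" using L(2) s by simp
    obtain y where y: "y \<in> profiles n \<kappa>" "map y [1..<n+1] = s # L"
      by (rule bexE[OF list_prof[OF l1 l2]])
    have "y 1 # map y [2..<n+1] = s # L" using y(2) unfolding hu by (simp only: list.map)
    hence "y 1 = s" "map y [2..<n+1] = L" by simp_all
    thus ?thesis using y(1) L(3) by (intro bexI[of _ y]) simp_all
  qed
  have Biff: "condB \<longleftrightarrow> (\<forall>i\<in>{3..n}. \<forall>y\<in>profiles n \<kappa>. c 1 y + c 1 (y \<circ> ?T 2 i) = 0)"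
  proof
    assume cB: condB
    show "\<forall>i\<in>{3..n}. \<forall>y\<in>profiles n \<kappa>. c 1 y + c 1 (y \<circ> ?T 2 i) = 0"
    proof (intro ballI)
      fix i y assume i: "i \<in> {3..n}" and y: "y \<in> profiles n \<kappa>"
      have s: "y 1 \<in> {1..\<kappa>}" using y n2 by (auto simp: profiles_def PiE_iff)
      have tp: "?T 2 i permutes {1..n}" using i by (intro permutes_swap_id) auto
      have cB': "\<forall>s\<in>{1..\<kappa>}. \<forall>i\<in>{3..n}. Nm s i = 0\<^sub>m 1 (\<kappa> ^ (n - 1))"
        using cB unfolding condB_def Nm_def .
      have N0: "Nm (y 1) i = 0\<^sub>m 1 (\<kappa> ^ (n - 1))" using bspec[OF bspec[OF cB' s] i] .
      have okt: "ok \<kappa> (map y [2..<n+1])" using okP[OF y] unfolding hu by (simp del: upt_Suc)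
      have jl: "encl \<kappa> (map y [2..<n+1]) < \<kappa> ^ (n - 1)" using encl_bound'[OF okt] by (simp del: upt_Suc)
      have "c 1 y + c 1 (y \<circ> ?T 2 i) = V 1 $$ (0, E y) + V 1 $$ (0, E (y \<circ> ?T 2 i))"
        using cE[of 1 y] cE[of 1 "y \<circ> ?T 2 i"] y prof_comp[OF y tp] n2 by auto
      also have "\<dots> = Nm (y 1) i $$ (0, encl \<kappa> (map y [2..<n+1]))" using Nfact[OF s i] y by auto
      also have "\<dots> = 0" unfolding N0 using jl by simp
      finally show "c 1 y + c 1 (y \<circ> ?T 2 i) = 0" .
    qed
  next
    assume hB: "\<forall>i\<in>{3..n}. \<forall>y\<in>profiles n \<kappa>. c 1 y + c 1 (y \<circ> ?T 2 i) = 0"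
    show condB unfolding condB_def Nm_def[symmetric]
    proof (intro ballI)
      fix s i assume s: "s \<in> {1..\<kappa>}" and i: "i \<in> {3..n}"
      have tp: "?T 2 i permutes {1..n}" using i by (intro permutes_swap_id) auto
      have Nc: "Nm s i \<in> carrier_mat 1 (\<kappa> ^ (n - 1))" using Nfact[OF s i] by blast
      show "Nm s i = 0\<^sub>m 1 (\<kappa> ^ (n - 1))"
      proof (rule eq_matI)
        fix r j assume r: "r < dim_row (0\<^sub>m 1 (\<kappa> ^ (n - 1)) :: real mat)"
          and j: "j < dim_col (0\<^sub>m 1 (\<kappa> ^ (n - 1)) :: real mat)"
        have r0: "r = 0" and j': "j < \<kappa> ^ (n - 1)" using r j by auto
        obtain y where y: "y \<in> profiles n \<kappa>" and y2: "y 1 = s \<and> encl \<kappa> (map y [2..<n+1]) = j"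
          by (rule bexE[OF Tsurj[OF s j']])
        hence y: "y \<in> profiles n \<kappa>" "y 1 = s" "encl \<kappa> (map y [2..<n+1]) = j" by simp_all
        have "Nm s i $$ (0, j) = V 1 $$ (0, E y) + V 1 $$ (0, E (y \<circ> ?T 2 i))"
          using Nfact[OF s i] y by auto
        also have "\<dots> = c 1 y + c 1 (y \<circ> ?T 2 i)"
          using cE[of 1 y] cE[of 1 "y \<circ> ?T 2 i"] y prof_comp[OF y(1) tp] n2 by auto
        also have "\<dots> = 0" using bspec[OF bspec[OF hB i] y(1)] .
        finally show "Nm s i $$ (r, j) = (0\<^sub>m 1 (\<kappa> ^ (n - 1)) :: real mat) $$ (r, j)"
          using r0 j' by simp
      qed (use Nc in auto)
    qed
  qed
  have Sk: "skew_symmetric n \<kappa> c \<longleftrightarrow> condA \<and> condB"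
    unfolding skew_iff[OF n2] Aiff Biff ..
  have B2: "n = 2 \<Longrightarrow> condB" unfolding condB_def by auto
  show ?thesis using Sk B2 by auto
qed

end
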